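(* Let $\mathcal{U}$ be a universe of $n$ element types with frequencies $f:\mathcal{U}\to\{1,2,\dots\}$ and total $N=\sum_{e\in\mathcal{U}}f(e)$. Let $\mathcal{G}=\{\mathbf{g}_1,\dots,\mathbf{g}_\ell\}$, $\ell\ge 2$, be a partition of $\mathcal{U}$ into nonempty groups with $n_j=|\mathbf{g}_j|$ and $N_j=\sum_{e\in\mathbf{g}_j}f(e)$. Let $w$ be a positive integer such that each $w_j=\frac{n_j}{n}w$ is a positive integer. Consider (i) the standard one-row Count-Min sketch (CM), in which each element type is hashed independently and uniformly at random into $w$ bins, and (ii) the one-row Fair-Count-Min sketch (FCM), in which the $w$ bins are split into disjoint blocks of sizes $w_1,\dots,w_\ell$ and each element type of $\mathbf{g}_j$ is hashed independently and uniformly at random into block $j$. Then $\mathcal{L}_{FCM}<\mathcal{L}_{CM}$, i.e. the price of fairness $\mathcal{L}_{FCM}-\mathcal{L}_{CM}$ is negative.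
   Context: In a one-row sketch with hash $\mathsf{h}$, the estimate of $e$ is $\hat f(e)=\sum_{e':\mathsf{h}(e')=\mathsf{h}(e)}f(e')$ and its additive error is $\varepsilon_A(e)=\hat f(e)-f(e)=\sum_{e'\neq e:\mathsf{h}(e')=\mathsf{h}(e)}f(e')$. The total expected additive error of a sketch is $\mathcal{L}=\sum_{e\in\mathcal{U}}\mathbb{E}[\varepsilon_A(e)]$, expectation over the random hash. The price of fairness is $\mathcal{L}_{FCM}-\mathcal{L}_{CM}$. *)

theory Defs
  imports "HOL-Probability.Probability"
begin

definition est :: "'a set \<Rightarrow> ('a \<Rightarrow> nat) \<Rightarrow> ('a \<Rightarrow> nat) \<Rightarrow> 'a \<Rightarrow> real" where
  "est U f h e = (\<Sum>e'\<in>{e'\<in>U. h e' = h e}. real (f e'))"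

definition add_err :: "'a set \<Rightarrow> ('a \<Rightarrow> nat) \<Rightarrow> ('a \<Rightarrow> nat) \<Rightarrow> 'a \<Rightarrow> real" where
  "add_err U f h e = est U f h e - real (f e)"

definition total_loss :: "'a set \<Rightarrow> ('a \<Rightarrow> nat) \<Rightarrow> ('a \<Rightarrow> nat) set \<Rightarrow> real" where
  "total_loss U f H = (\<Sum>e\<in>U. measure_pmf.expectation (pmf_of_set H) (\<lambda>h. add_err U f h e))"

text \<open>Count-Min: each element independently uniform in the w bins {0..<w}.\<close>
definition CM_hashes :: "'a set \<Rightarrow> nat \<Rightarrow> ('a \<Rightarrow> nat) set" where
  "CM_hashes U w = (U \<rightarrow>\<^sub>E {..<w})"

definition block :: "(nat \<Rightarrow> nat) \<Rightarrow> nat \<Rightarrow> nat set" where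
  "block wj j = {(\<Sum>i<j. wj i) ..< (\<Sum>i<j. wj i) + wj j}"

text \<open>Fair-Count-Min: each element of group g j independently uniform in block j.\<close>
definition FCM_hashes :: "'a set \<Rightarrow> nat \<Rightarrow> (nat \<Rightarrow> 'a set) \<Rightarrow> (nat \<Rightarrow> nat) \<Rightarrow> ('a \<Rightarrow> nat) set" where
  "FCM_hashes U l g wj =
     {h. (\<forall>e. e \<notin> U \<longrightarrow> h e = undefined) \<and> (\<forall>j<l. \<forall>e\<in>g j. h e \<in> block wj j)}"

end

theory Submission
  imports Defs
begin

lemma expA:
  assumes "finite H" "H \<noteq> {}" "finite U" "e \<in> U"
  shows "measure_pmf.expectation (pmf_of_set H) (\<lambda>h. add_err U f h e)
     = (\<Sum>e'\<in>U-{e}. real (f e') * measure_pmf.prob (pmf_of_set H) {h. h e' = h e})"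
proof -
  have ae: "add_err U f h e = (\<Sum>e'\<in>U-{e}. real (f e') * (if h e' = h e then 1 else 0))" for h
  proof -
    have "est U f h e = (\<Sum>e'\<in>U. real (f e') * (if h e' = h e then 1 else 0))"
      unfolding est_def using assms(3) by (simp add: sum.inter_filter[symmetric] if_distrib cong: if_cong)
    also have "\<dots> = real (f e) + (\<Sum>e'\<in>U-{e}. real (f e') * (if h e' = h e then 1 else 0))"
      using assms(3,4) by (simp add: sum.remove)
    finally show ?thesis unfolding add_err_def by simp
  qed
  have "measure_pmf.expectation (pmf_of_set H) (\<lambda>h. add_err U f h e)
      = (\<Sum>h\<in>H. add_err U f h e) / card H"
    using assms by (simp add: integral_pmf_of_set)
  also have "\<dots> = (\<Sum>e'\<in>U-{e}. real (f e') * ((\<Sum>h\<in>H. (if h e' = h e then 1 else 0)) / card H))"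
    unfolding ae by (simp add: sum.swap[of _ H] sum_divide_distrib sum_distrib_left)
  also have "\<dots> = (\<Sum>e'\<in>U-{e}. real (f e') * measure_pmf.prob (pmf_of_set H) {h. h e' = h e})"
  proof (intro sum.cong refl)
    fix e' assume "e' \<in> U - {e}"
    have "(\<Sum>h\<in>H. (if h e' = h e then 1 else 0::real)) = card (H \<inter> {h. h e' = h e})"
      using assms(1) by (simp add: sum.If_cases Int_def)
    then show "real (f e') * ((\<Sum>h\<in>H. (if h e' = h e then 1 else 0)) / card H) = real (f e') * measure_pmf.prob (pmf_of_set H) {h. h e' = h e}"
      using assms by (simp add: measure_pmf_of_set)
  qed
  finally show ?thesis .
qed

lemma probB:
  assumes U: "finite U" and B: "\<And>x. x \<in> U \<Longrightarrow> finite (B x)" "\<And>x. x \<in> U \<Longrightarrow> B x \<noteq> {}"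
    and e: "e \<in> U" "e' \<in> U" "e \<noteq> e'"
  shows "measure_pmf.prob (pmf_of_set (PiE U B)) {h. h e' = h e}
       = card (B e \<inter> B e') / (card (B e) * card (B e'))"
proof -
  let ?p = "\<lambda>x. pmf_of_set (B x)"
  have "PiE_dflt U undefined B = PiE U B"
    by (auto simp: PiE_dflt_def PiE_def extensional_def)
  hence P: "pmf_of_set (PiE U B) = Pi_pmf U undefined ?p"
    using Pi_pmf_of_set[of U B undefined] U B by simp
  define V where "V = U - {e}"
  have UV: "U = insert e V" "e \<notin> V" "finite V" "e' \<in> V" using e U by (auto simp: V_def)
  have "map_pmf (\<lambda>h. (h e, h e')) (Pi_pmf U undefined ?p) = pair_pmf (?p e) (?p e')"
  proof -
    have "map_pmf (\<lambda>h. (h e, h e')) (Pi_pmf U undefined ?p)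
        = map_pmf (\<lambda>(y, f). (y, f e')) (pair_pmf (?p e) (Pi_pmf V undefined ?p))"
      unfolding UV(1) using UV e by (subst Pi_pmf_insert) (auto simp: pmf.map_comp o_def case_prod_unfold)
    also have "\<dots> = pair_pmf (?p e) (map_pmf (\<lambda>f. f e') (Pi_pmf V undefined ?p))"
      by (simp add: pair_map_pmf2 apsnd_def map_prod_def case_prod_unfold)
    also have "\<dots> = pair_pmf (?p e) (?p e')"
      using UV by (simp add: Pi_pmf_component)
    finally show ?thesis .
  qed
  note M = this
  have S: "{h. h e' = h e} = (\<lambda>h. (h e, h e')) -` {(a,b). b = a}" by auto
  have "measure_pmf.prob (pmf_of_set (PiE U B)) {h. h e' = h e}
      = measure_pmf.prob (pair_pmf (?p e) (?p e')) {(a,b). b = a}"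
    unfolding P M[symmetric] by (simp only: measure_map_pmf S[symmetric])
  also have "\<dots> = measure_pmf.prob (pair_pmf (?p e) (?p e')) ((\<lambda>a. (a,a)) ` (B e \<inter> B e'))"
  proof -
    have "{(a,b). b = a} \<inter> set_pmf (pair_pmf (?p e) (?p e')) = (\<lambda>a. (a,a)) ` (B e \<inter> B e')"
      using B e by auto
    thus ?thesis by (metis measure_Int_set_pmf)
  qed
  also have "\<dots> = (\<Sum>x\<in>(\<lambda>a. (a,a)) ` (B e \<inter> B e'). pmf (pair_pmf (?p e) (?p e')) x)"
    using B e by (intro measure_measure_pmf_finite) auto
  also have "\<dots> = (\<Sum>a\<in>B e \<inter> B e'. 1 / (card (B e) * card (B e')))"
    using B e by (subst sum.reindex) (auto simp: inj_on_def pmf_pair)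
  also have "\<dots> = card (B e \<inter> B e') / (card (B e) * card (B e'))" by simp
  finally show ?thesis .
qed


lemma block_card: "card (block wj j) = wj j" by (simp add: block_def)

lemma block_disj: assumes "i < j" shows "block wj i \<inter> block wj j = {}"
proof -
  have "(\<Sum>k<Suc i. wj k) \<le> (\<Sum>k<j. wj k)"
    using assms by (intro sum_mono2) auto
  thus ?thesis by (auto simp: block_def)
qed

lemma block_inter: "card (block wj i \<inter> block wj j) = (if i = j then wj j else 0)"
proof (cases "i = j")
  case False
  then consider "i < j" | "j < i" by linarith
  then show ?thesis using False block_disj[of i j wj] block_disj[of j i wj] by cases (auto simp: Int_commute)
qed (simp add: block_card)

lemma swap_pairs:
  assumes "finite U"
  shows "(\<Sum>e\<in>U. \<Sum>e'\<in>U-{e}. F e e') = (\<Sum>e'\<in>U. \<Sum>e\<in>U-{e'}. (F e e' :: real))"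
proof -
  have "\<And>e. U - {e} = {e'\<in>U. e \<noteq> e'}" "\<And>e'. U - {e'} = {e\<in>U. e \<noteq> e'}" by auto
  thus ?thesis using sum.swap_restrict[OF assms assms, of F "\<lambda>e e'. e \<noteq> e'"] by simp
qed


theorem mainTheorem2:
  fixes U :: "'a set" and f :: "'a \<Rightarrow> nat" and l :: nat and g :: "nat \<Rightarrow> 'a set"
    and w :: nat and wj :: "nat \<Rightarrow> nat"
  assumes finU: "finite U"
    and fpos: "\<forall>e\<in>U. f e \<ge> 1"
    and l2: "l \<ge> 2"
    and gne: "\<forall>j<l. g j \<noteq> {}"
    and gdisj: "\<forall>i<l. \<forall>j<l. i \<noteq> j \<longrightarrow> g i \<inter> g j = {}"
    and gcover: "(\<Union>j<l. g j) = U"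
    and wpos: "w > 0"
    and wj_def: "\<forall>j<l. real (wj j) = real (card (g j)) / real (card U) * real w"
    and wj_pos: "\<forall>j<l. wj j > 0"
  shows "total_loss U f (FCM_hashes U l g wj) < total_loss U f (CM_hashes U w)"
proof -
  define n where "n = card U"
  have gU: "j < l \<Longrightarrow> g j \<subseteq> U" for j using gcover by blast
  have Une: "U \<noteq> {}"
  proof -
    have "0 < l" using l2 by simp
    then obtain x where "x \<in> g 0" using gne by blast
    thus ?thesis using gU[OF \<open>0 < l\<close>] by blast
  qed
  have npos: "n > 0" unfolding n_def using Une finU by (simp add: card_gt_0_iff)
  have "\<forall>e\<in>U. \<exists>j. j < l \<and> e \<in> g j" using gcover by blast
  from bchoice[OF this] obtain gi where gi0: "\<forall>e\<in>U. gi e < l \<and> e \<in> g (gi e)" by blast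
  have gi: "gi e < l \<and> e \<in> g (gi e)" if "e \<in> U" for e using gi0 that by blast
  have gi_eq: "gi e = j" if "j < l" "e \<in> g j" for e j
  proof (rule ccontr)
    assume ne: "gi e \<noteq> j"
    have eU: "e \<in> U" using gU[OF that(1)] that(2) by blast
    have "g (gi e) \<inter> g j = {}" using gdisj[rule_format, of "gi e" j] gi[OF eU] that(1) ne by blast
    thus False using gi[OF eU] that(2) by blast
  qed
  let ?B = "\<lambda>e. block wj (gi e)"
  have FCM: "FCM_hashes U l g wj = PiE U ?B"
  proof (intro equalityI subsetI)
    fix h assume "h \<in> FCM_hashes U l g wj"
    then have h1: "\<forall>e. e \<notin> U \<longrightarrow> h e = undefined" and h2: "\<forall>j<l. \<forall>e\<in>g j. h e \<in> block wj j"
      unfolding FCM_hashes_def by auto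
    show "h \<in> PiE U ?B"
    proof (rule PiE_I)
      fix x assume "x \<in> U" then show "h x \<in> ?B x" using h2 gi[of x] by blast
    next
      fix x assume "x \<notin> U" then show "h x = undefined" using h1 by blast
    qed
  next
    fix h assume h: "h \<in> PiE U ?B"
    show "h \<in> FCM_hashes U l g wj" unfolding FCM_hashes_def
    proof (intro CollectI conjI allI impI ballI)
      fix e assume "e \<notin> U" then show "h e = undefined" using h by auto
    next
      fix j e assume "j < l" "e \<in> g j"
      then have eU: "e \<in> U" using gU by blast
      have "h e \<in> block wj (gi e)" using h eU by blast
      thus "h e \<in> block wj j" using gi_eq[OF \<open>j < l\<close> \<open>e \<in> g j\<close>] by simp
    qed
  qed
  have finB: "\<And>e. e \<in> U \<Longrightarrow> finite (?B e)" by (simp add: block_def)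
  have neB: "?B e \<noteq> {}" if e: "e \<in> U" for e
  proof -
    have "card (?B e) > 0" using wj_pos gi[OF e] by (simp add: block_card)
    thus ?thesis by auto
  qed
  have gen: "total_loss U f (PiE U B) =
       (\<Sum>e'\<in>U. real (f e') * (\<Sum>e\<in>U-{e'}. card (B e \<inter> B e') / (card (B e) * card (B e'))))"
    if B: "\<And>x. x \<in> U \<Longrightarrow> finite (B x)" "\<And>x. x \<in> U \<Longrightarrow> B x \<noteq> {}" for B :: "'a \<Rightarrow> nat set"
  proof -
    have fin: "finite (PiE U B)" using finU B by (intro finite_PiE) auto
    have ne: "PiE U B \<noteq> {}" using B by (simp add: PiE_eq_empty_iff)
    have "total_loss U f (PiE U B) = (\<Sum>e\<in>U. \<Sum>e'\<in>U-{e}. real (f e') * (card (B e \<inter> B e') / (card (B e) * card (B e'))))"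
      unfolding total_loss_def
    proof (intro sum.cong refl)
      fix e assume e: "e \<in> U"
      show "measure_pmf.expectation (pmf_of_set (PiE U B)) (\<lambda>h. add_err U f h e) =
         (\<Sum>e'\<in>U-{e}. real (f e') * (card (B e \<inter> B e') / (card (B e) * card (B e'))))"
        unfolding expA[OF fin ne finU e]
      proof (intro sum.cong refl)
        fix e' assume e': "e' \<in> U - {e}"
        show "real (f e') * measure_pmf.prob (pmf_of_set (PiE U B)) {h. h e' = h e} =
            real (f e') * (card (B e \<inter> B e') / (card (B e) * card (B e')))"
        proof -
          have e2: "e' \<in> U" "e \<noteq> e'" using e' by auto
          show ?thesis using probB[OF finU B e e2] by simp
        qed
      qed
    qed
    also have "\<dots> = (\<Sum>e'\<in>U. \<Sum>e\<in>U-{e'}. real (f e') * (card (B e \<inter> B e') / (card (B e) * card (B e'))))"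
      by (rule swap_pairs[OF finU])
    also have "\<dots> = (\<Sum>e'\<in>U. real (f e') * (\<Sum>e\<in>U-{e'}. card (B e \<inter> B e') / (card (B e) * card (B e'))))"
      by (simp add: sum_distrib_left)
    finally show ?thesis .
  qed
  have CM: "CM_hashes U w = PiE U (\<lambda>_. {..<w})" by (simp add: CM_hashes_def)
  have LC: "total_loss U f (CM_hashes U w) = (\<Sum>e'\<in>U. real (f e') * ((n - 1) / w))"
  proof -
    have "total_loss U f (CM_hashes U w) = (\<Sum>e'\<in>U. real (f e') * (\<Sum>e\<in>U-{e'}. card ({..<w} \<inter> {..<w}) / (card {..<w} * card ({..<w}::nat set))))"
      unfolding CM using wpos by (subst gen) auto
    also have "\<dots> = (\<Sum>e'\<in>U. real (f e') * ((n - 1) / w))"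
      using finU wpos by (intro sum.cong refl) (auto simp: n_def card_Diff_singleton of_nat_diff)
    finally show ?thesis .
  qed
  have LF: "total_loss U f (FCM_hashes U l g wj) = (\<Sum>e'\<in>U. real (f e') * ((real (card (g (gi e'))) - 1) / wj (gi e')))"
  proof -
    have "total_loss U f (FCM_hashes U l g wj) = (\<Sum>e'\<in>U. real (f e') * (\<Sum>e\<in>U-{e'}. card (?B e \<inter> ?B e') / (card (?B e) * card (?B e'))))"
      unfolding FCM using finB neB by (subst gen) auto
    also have "\<dots> = (\<Sum>e'\<in>U. real (f e') * ((real (card (g (gi e'))) - 1) / wj (gi e')))"
    proof (intro sum.cong refl arg_cong2[where f="(*)"])
      fix e' assume e': "e' \<in> U"
      let ?j = "gi e'"
      have "(\<Sum>e\<in>U-{e'}. card (?B e \<inter> ?B e') / (card (?B e) * card (?B e')))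
          = (\<Sum>e\<in>U-{e'}. if e \<in> g ?j then 1 / wj ?j else (0::real))"
      proof (intro sum.cong refl)
        fix e assume e: "e \<in> U - {e'}"
        have eU: "e \<in> U" using e by blast
        have "gi e = ?j \<longleftrightarrow> e \<in> g ?j"
        proof
          assume "gi e = ?j" thus "e \<in> g ?j" using gi[OF eU] by simp
        next
          assume "e \<in> g ?j" thus "gi e = ?j" using gi_eq gi[OF e'] by blast
        qed
        moreover have "wj ?j > 0" using wj_pos gi e' by blast
        ultimately show "card (?B e \<inter> ?B e') / (card (?B e) * card (?B e')) = (if e \<in> g ?j then 1 / wj ?j else (0::real))"
          by (auto simp: block_inter block_card)
      qed
      also have "\<dots> = card ((U - {e'}) \<inter> g ?j) / wj ?j"
        using finU by (simp add: sum.If_cases)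
      also have "(U - {e'}) \<inter> g ?j = g ?j - {e'}" using gU gi e' by blast
      also have "card (g ?j - {e'}) = card (g ?j) - 1" using gi e' by simp
      also have "real (card (g ?j) - 1) = real (card (g ?j)) - 1"
        using gi e' by (metis One_nat_def Suc_leI card_gt_0_iff empty_iff finite_subset finU gU of_nat_diff of_nat_1)
      finally show "(\<Sum>e\<in>U-{e'}. card (?B e \<inter> ?B e') / (card (?B e) * card (?B e'))) = (real (card (g ?j)) - 1) / wj ?j" .
    qed
    finally show ?thesis .
  qed
  show ?thesis unfolding LC LF
  proof (rule sum_strict_mono[OF finU Une])
    fix e' assume e': "e' \<in> U"
    define j where "j = gi e'"
    have jl: "j < l" and ej: "e' \<in> g j" using gi e' j_def by auto
    define j' where "j' = (if j = 0 then 1 else 0 :: nat)"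
    have j'l: "j' < l" "j' \<noteq> j" using l2 by (auto simp: j'_def)
    have "g j \<subset> U"
    proof -
      obtain x where "x \<in> g j'" using gne j'l by blast
      hence "x \<in> U" "x \<notin> g j" using gU[OF j'l(1)] gdisj jl j'l by auto
      thus ?thesis using gU[OF jl] by blast
    qed
    hence njn: "card (g j) < n" unfolding n_def using finU psubset_card_mono by blast
    have nj1: "card (g j) \<ge> 1" using ej finU gU[OF jl]
      by (metis One_nat_def Suc_leI card_gt_0_iff empty_iff finite_subset)
    have wjv: "real (wj j) = real (card (g j)) * real w / real n" using wj_def jl n_def by simp
    have "(real (card (g j)) - 1) / wj j < (real n - 1) / w"
    proof -
      let ?a = "real (card (g j))" and ?n = "real n" and ?w = "real w"
      have pos: "?a > 0" "?n > 0" "?w > 0" using nj1 npos wpos by auto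
      have lt: "?a < ?n" using njn by simp
      have "(?a - 1) / (?a * ?w / ?n) = (?a - 1) * ?n / (?a * ?w)" using pos by (simp add: field_simps)
      also have "\<dots> < (?n - 1) / ?w"
      proof -
        have "(?a - 1) * ?n < (?n - 1) * ?a" using lt by (simp add: algebra_simps)
        hence "(?a - 1) * ?n / (?a * ?w) < (?n - 1) * ?a / (?a * ?w)"
          using pos by (intro divide_strict_right_mono) auto
        also have "\<dots> = (?n - 1) / ?w" using pos by simp
        finally show ?thesis .
      qed
      finally show ?thesis using wjv by simp
    qed
    moreover have "real (n - 1) = real n - 1" using npos by (simp add: of_nat_diff)
    ultimately have "(real (card (g (gi e'))) - 1) / wj (gi e') < real (n - 1) / w" using j_def by simp
    moreover have "real (f e') > 0" using fpos e' by fastforce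
    ultimately show "real (f e') * ((real (card (g (gi e'))) - 1) / wj (gi e')) < real (f e') * (real (n - 1) / w)"
      by (rule mult_strict_left_mono)
  qed
qed
end
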